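(* Let $G$ be a connected graph of order $n\geq 2$ and let $g:V(G_1)\to V(G_2)$ be any function, where $G_1,G_2$ are disjoint copies of $G$. Then $$1\leq Dist(F_{G})\leq Dist(G)+1.$$ Moreover, both bounds are sharp: there exist a connected graph $G$ of order at least $2$ and a function $g$ with $Dist(F_G)=1$, and there exist a connected graph $G$ of order at least $2$ and a function $g$ with $Dist(F_G)=Dist(G)+1$.
   Context: All graphs are finite, simple and undirected. A labeling $f:V(H)\to\{1,\dots,t\}$ of a graph $H$ is $t$-distinguishing if the only automorphism of $H$ preserving all vertex labels is the identity. The distinguishing number $Dist(H)$ is the least $t$ such that $H$ has a $t$-distinguishing labeling. Functigraph: let $G_1,G_2$ be disjoint copies of a connected graph $G$ and $g:V(G_1)\to V(G_2)$ a function. The functigraph $F_G$ (which depends on $g$) has vertex set $V(G_1)\cup V(G_2)$ and edge set $E(G_1)\cup E(G_2)\cup\{uv: u\in V(G_1),\ g(u)=v\}$. *)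

theory Defs
  imports Main
begin

definition simple_graph :: "'v set \<Rightarrow> ('v \<Rightarrow> 'v \<Rightarrow> bool) \<Rightarrow> bool" where
  "simple_graph V E \<longleftrightarrow> finite V \<and>
     (\<forall>x y. E x y \<longrightarrow> x \<in> V \<and> y \<in> V) \<and>
     (\<forall>x y. E x y \<longrightarrow> E y x) \<and> (\<forall>x. \<not> E x x)"

definition connected_graph :: "'v set \<Rightarrow> ('v \<Rightarrow> 'v \<Rightarrow> bool) \<Rightarrow> bool" where
  "connected_graph V E \<longleftrightarrow> V \<noteq> {} \<and>
     (\<forall>x\<in>V. \<forall>y\<in>V. (x, y) \<in> {(a, b). E a b}\<^sup>*)"

definition graph_aut :: "'v set \<Rightarrow> ('v \<Rightarrow> 'v \<Rightarrow> bool) \<Rightarrow> ('v \<Rightarrow> 'v) \<Rightarrow> bool" where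
  "graph_aut V E \<sigma> \<longleftrightarrow> bij_betw \<sigma> V V \<and>
     (\<forall>x\<in>V. \<forall>y\<in>V. E x y \<longleftrightarrow> E (\<sigma> x) (\<sigma> y))"

definition distinguishing :: "'v set \<Rightarrow> ('v \<Rightarrow> 'v \<Rightarrow> bool) \<Rightarrow> nat \<Rightarrow> ('v \<Rightarrow> nat) \<Rightarrow> bool" where
  "distinguishing V E t f \<longleftrightarrow> (\<forall>x\<in>V. f x \<in> {1..t}) \<and>
     (\<forall>\<sigma>. graph_aut V E \<sigma> \<and> (\<forall>x\<in>V. f (\<sigma> x) = f x) \<longrightarrow> (\<forall>x\<in>V. \<sigma> x = x))"

definition Dist :: "'v set \<Rightarrow> ('v \<Rightarrow> 'v \<Rightarrow> bool) \<Rightarrow> nat" where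
  "Dist V E = (LEAST t. \<exists>f. distinguishing V E t f)"

(* Functigraph: G_1 = Inl-copy, G_2 = Inr-copy, plus edges u -- g(u) *)
definition functi_V :: "'a set \<Rightarrow> ('a + 'a) set" where
  "functi_V V = Inl ` V \<union> Inr ` V"

fun functi_E :: "'a set \<Rightarrow> ('a \<Rightarrow> 'a \<Rightarrow> bool) \<Rightarrow> ('a \<Rightarrow> 'a) \<Rightarrow> 'a + 'a \<Rightarrow> 'a + 'a \<Rightarrow> bool" where
  "functi_E V E g (Inl x) (Inl y) = E x y"
| "functi_E V E g (Inr x) (Inr y) = E x y"
| "functi_E V E g (Inl u) (Inr v) = (u \<in> V \<and> g u = v)"
| "functi_E V E g (Inr v) (Inl u) = (u \<in> V \<and> g u = v)"

end

theory Submission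
  imports Defs
begin


lemma exists_dist:
  assumes "finite V"
  shows "\<exists>f. distinguishing V E (card V) f"
proof -
  obtain h where h: "bij_betw h V {0..<card V}" using ex_bij_betw_finite_nat[OF assms] by blast
  have "distinguishing V E (card V) (\<lambda>x. h x + 1)"
    unfolding distinguishing_def
  proof (intro conjI allI impI ballI)
    fix x assume "x \<in> V" then show "h x + 1 \<in> {1..card V}" using h bij_betwE[OF h] by fastforce
  next
    fix \<sigma> x assume a: "graph_aut V E \<sigma> \<and> (\<forall>x\<in>V. h (\<sigma> x) + 1 = h x + 1)" and x: "x \<in> V"
    then have "\<sigma> x \<in> V" by (auto simp: graph_aut_def bij_betw_def)
    with a x h show "\<sigma> x = x" by (auto simp: bij_betw_def inj_on_def)
  qed
  then show ?thesis by blast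
qed

lemma Dist_ex:
  assumes "finite V"
  shows "distinguishing V E (Dist V E) (SOME f. distinguishing V E (Dist V E) f)"
proof -
  have "\<exists>f. distinguishing V E (Dist V E) f"
    unfolding Dist_def by (rule LeastI_ex) (use exists_dist[OF assms] in blast)
  then show ?thesis by (rule someI_ex)
qed

lemma Dist_le: "distinguishing V E t f \<Longrightarrow> Dist V E \<le> t"
  unfolding Dist_def by (rule Least_le) blast

lemma Dist_ge1:
  assumes "V \<noteq> {}" "distinguishing V E t f"
  shows "1 \<le> Dist V E"
proof -
  have "\<exists>f. distinguishing V E (Dist V E) f"
    unfolding Dist_def by (rule LeastI_ex) (use assms in blast)
  then obtain f' where "distinguishing V E (Dist V E) f'" by blast
  moreover obtain x where "x \<in> V" using assms by blast
  ultimately show ?thesis unfolding distinguishing_def by fastforce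
qed

lemma restrict_aut:
  assumes "graph_aut V' E' \<sigma>" "finite V" "inj c" "c ` V \<subseteq> V'"
    "\<forall>x\<in>V. \<tau> x \<in> V \<and> \<sigma> (c x) = c (\<tau> x)" "\<forall>x y. E' (c x) (c y) = E x y"
  shows "graph_aut V E \<tau>"
proof -
  have inj: "inj_on \<sigma> V'" using assms(1) by (auto simp: graph_aut_def bij_betw_def)
  have "inj_on \<tau> V"
  proof
    fix x y assume "x \<in> V" "y \<in> V" "\<tau> x = \<tau> y"
    then have "\<sigma> (c x) = \<sigma> (c y)" using assms(5) by auto
    then have "c x = c y" using inj assms(4) \<open>x \<in> V\<close> \<open>y \<in> V\<close> by (auto simp: inj_on_def)
    then show "x = y" using assms(3) by (auto simp: inj_def)
  qed
  moreover have "\<tau> ` V \<subseteq> V" using assms(5) by auto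
  ultimately have "bij_betw \<tau> V V" using endo_inj_surj[OF assms(2)] by (auto simp: bij_betw_def)
  moreover have "E x y \<longleftrightarrow> E (\<tau> x) (\<tau> y)" if "x \<in> V" "y \<in> V" for x y
  proof -
    have "E x y = E' (c x) (c y)" using assms(6) by simp
    also have "\<dots> = E' (\<sigma> (c x)) (\<sigma> (c y))" using assms(1,4) that by (auto simp: graph_aut_def)
    also have "\<dots> = E (\<tau> x) (\<tau> y)" using assms(5,6) that by simp
    finally show ?thesis .
  qed
  ultimately show ?thesis by (auto simp: graph_aut_def)
qed

lemma main_ub:
  fixes V :: "'a set" and g :: "'a \<Rightarrow> 'a"
  assumes S: "simple_graph V E" and C: "connected_graph V E" and gV: "\<forall>u\<in>V. g u \<in> V"
  shows "\<exists>L. distinguishing (functi_V V) (functi_E V E g) (Dist V E + 1) L"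
proof -
  define t where "t = Dist V E"
  define f where "f = (SOME f. distinguishing V E (Dist V E) f)"
  have fin: "finite V" and Vne: "V \<noteq> {}" using S C by (auto simp: simple_graph_def connected_graph_def)
  have Esym: "\<And>x y. E x y \<Longrightarrow> x \<in> V \<and> y \<in> V" using S by (auto simp: simple_graph_def)
  have fd: "distinguishing V E t f" unfolding f_def t_def by (rule Dist_ex[OF fin])
  have frange: "\<And>x. x \<in> V \<Longrightarrow> 1 \<le> f x \<and> f x \<le> t" using fd by (auto simp: distinguishing_def)
  define L where "L = case_sum f (\<lambda>y. if y \<in> g ` V then t + 1 else f y)"
  let ?FV = "functi_V V" and ?FE = "functi_E V E g"
  have "distinguishing ?FV ?FE (t + 1) L"
    unfolding distinguishing_def
  proof (intro conjI allI impI ballI)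
    fix v assume "v \<in> ?FV"
    then show "L v \<in> {1..t + 1}"
    proof (cases v)
      case (Inl x) then show ?thesis using \<open>v \<in> ?FV\<close> frange[of x] by (auto simp: functi_V_def L_def)
    next
      case (Inr y) then show ?thesis using \<open>v \<in> ?FV\<close> frange[of y] by (auto simp: functi_V_def L_def)
    qed
  next
    fix \<sigma> v assume a: "graph_aut ?FV ?FE \<sigma> \<and> (\<forall>x\<in>?FV. L (\<sigma> x) = L x)" and v: "v \<in> ?FV"
    have aut: "graph_aut ?FV ?FE \<sigma>" and pres: "\<And>x. x \<in> ?FV \<Longrightarrow> L (\<sigma> x) = L x" using a by auto
    have bij: "bij_betw \<sigma> ?FV ?FV" using aut by (auto simp: graph_aut_def)
    have into: "\<And>x. x \<in> ?FV \<Longrightarrow> \<sigma> x \<in> ?FV" using bij by (auto simp: bij_betw_def)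
    have inj: "inj_on \<sigma> ?FV" using bij by (auto simp: bij_betw_def)
    have edge: "\<And>x y. x \<in> ?FV \<Longrightarrow> y \<in> ?FV \<Longrightarrow> ?FE x y \<longleftrightarrow> ?FE (\<sigma> x) (\<sigma> y)"
      using aut by (auto simp: graph_aut_def)
    have labT: "\<And>w. w \<in> ?FV \<Longrightarrow> (L w = t + 1) \<longleftrightarrow> w \<in> Inr ` g ` V"
    proof -
      fix w assume w: "w \<in> ?FV"
      show "(L w = t + 1) \<longleftrightarrow> w \<in> Inr ` g ` V"
      proof (cases w)
        case (Inl x) then show ?thesis using w frange[of x] by (auto simp: functi_V_def L_def)
      next
        case (Inr y) then show ?thesis using w frange[of y] by (auto simp: functi_V_def L_def)
      qed
    qed
    have Tpres: "\<And>w. w \<in> ?FV \<Longrightarrow> \<sigma> w \<in> Inr ` g ` V \<longleftrightarrow> w \<in> Inr ` g ` V"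
    proof -
      fix w assume w: "w \<in> ?FV"
      have "L (\<sigma> w) = L w" using pres w .
      then show "\<sigma> w \<in> Inr ` g ` V \<longleftrightarrow> w \<in> Inr ` g ` V" using labT[OF w] labT[OF into[OF w]] by simp
    qed
    have inlV: "Inl ` V \<subseteq> ?FV" and inrV: "Inr ` V \<subseteq> ?FV" by (auto simp: functi_V_def)
    have A: "\<forall>x\<in>V. \<sigma> (Inl x) \<in> Inl ` V"
    proof (rule ccontr)
      assume "\<not> ?thesis"
      then obtain x0 where x0: "x0 \<in> V" "\<sigma> (Inl x0) \<notin> Inl ` V" by blast
      have "\<sigma> (Inl x0) \<in> ?FV" using into x0 by (auto simp: functi_V_def)
      then obtain y0 where y0: "y0 \<in> V" "\<sigma> (Inl x0) = Inr y0" using x0 by (auto simp: functi_V_def)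
      have "y0 \<notin> g ` V" using Tpres[of "Inl x0"] x0 y0 by (auto simp: functi_V_def)
      have all: "\<sigma> (Inl x) \<in> Inr ` (V - g ` V)" if "x \<in> V" for x
      proof -
        have "(x0, x) \<in> {(a, b). E a b}\<^sup>*" using C x0 that by (auto simp: connected_graph_def)
        then show ?thesis
        proof (induction rule: rtrancl_induct)
          case base then show ?case using y0 \<open>y0 \<notin> g ` V\<close> by auto
        next
          case (step a c)
          then have Eac: "E a c" by simp
          then have ac: "a \<in> V" "c \<in> V" using Esym by auto
          from step.IH obtain b where b: "b \<in> V" "b \<notin> g ` V" "\<sigma> (Inl a) = Inr b" by auto
          have "?FE (\<sigma> (Inl a)) (\<sigma> (Inl c))" using edge[of "Inl a" "Inl c"] ac Eac by (auto simp: functi_V_def)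
          moreover have sc: "\<sigma> (Inl c) \<in> ?FV" using into ac by (auto simp: functi_V_def)
          moreover have "\<sigma> (Inl c) \<notin> Inr ` g ` V" using Tpres[of "Inl c"] ac by (auto simp: functi_V_def)
          ultimately show ?case
          proof (cases "\<sigma> (Inl c)")
            case (Inl u) then show ?thesis using b \<open>?FE (\<sigma> (Inl a)) (\<sigma> (Inl c))\<close> sc
              by (auto simp: functi_V_def)
          next
            case (Inr c')
            then have "E b c'" using b \<open>?FE (\<sigma> (Inl a)) (\<sigma> (Inl c))\<close> by simp
            then have "c' \<in> V" using Esym by blast
            then show ?thesis using Inr \<open>\<sigma> (Inl c) \<notin> Inr ` g ` V\<close> by auto
          qed
        qed
      qed
      have i1: "inj_on \<sigma> (Inl ` V)" using inj_on_subset[OF inj inlV] .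
      have s1: "\<sigma> ` Inl ` V \<subseteq> Inr ` (V - g ` V)" using all by auto
      have "card V = card (\<sigma> ` Inl ` V)" using i1 by (simp add: card_image)
      also have "\<dots> \<le> card (Inr ` (V - g ` V) :: ('a + 'a) set)" using s1 fin by (intro card_mono) auto
      also have "\<dots> = card (V - g ` V)" by (simp add: card_image)
      also have "\<dots> < card V"
        apply (rule psubset_card_mono[OF fin]) using x0 gV by blast
      finally show False by simp
    qed
    define \<tau>1 where "\<tau>1 x = projl (\<sigma> (Inl x))" for x
    have t1: "\<forall>x\<in>V. \<tau>1 x \<in> V \<and> \<sigma> (Inl x) = Inl (\<tau>1 x)" using A by (auto simp: \<tau>1_def)
    have aut1: "graph_aut V E \<tau>1"
      by (rule restrict_aut[OF aut fin _ inlV t1]) auto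
    have "\<forall>x\<in>V. f (\<tau>1 x) = f x"
    proof
      fix x assume "x \<in> V"
      then have "L (\<sigma> (Inl x)) = L (Inl x)" using pres inlV by auto
      then show "f (\<tau>1 x) = f x" using t1 \<open>x \<in> V\<close> by (auto simp: L_def)
    qed
    then have "\<forall>x\<in>V. \<tau>1 x = x" using fd aut1 unfolding distinguishing_def by blast
    then have fix1: "\<forall>x\<in>V. \<sigma> (Inl x) = Inl x" using t1 by auto
    have B: "\<forall>y\<in>V. \<sigma> (Inr y) \<in> Inr ` V"
    proof
      fix y assume y: "y \<in> V"
      have s: "\<sigma> (Inr y) \<in> ?FV" using into y by (auto simp: functi_V_def)
      have "\<sigma> (Inr y) \<noteq> Inl x" if "x \<in> V" for x
      proof
        assume "\<sigma> (Inr y) = Inl x"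
        then have "\<sigma> (Inr y) = \<sigma> (Inl x)" using fix1 that by simp
        moreover have "Inr y \<in> ?FV" "Inl x \<in> ?FV" using y that by (auto simp: functi_V_def)
        ultimately have "Inr y = Inl x" using inj_onD[OF inj] by blast
        then show False by simp
      qed
      then show "\<sigma> (Inr y) \<in> Inr ` V" using s by (auto simp: functi_V_def)
    qed
    define \<tau>2 where "\<tau>2 x = projr (\<sigma> (Inr x))" for x
    have t2: "\<forall>x\<in>V. \<tau>2 x \<in> V \<and> \<sigma> (Inr x) = Inr (\<tau>2 x)" using B by (auto simp: \<tau>2_def)
    have aut2: "graph_aut V E \<tau>2"
      by (rule restrict_aut[OF aut fin _ inrV t2]) auto
    have gfix: "\<tau>2 (g u) = g u" if u: "u \<in> V" for u
    proof -
      have "?FE (Inl u) (Inr (g u))" using u by simp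
      then have "?FE (\<sigma> (Inl u)) (\<sigma> (Inr (g u)))" using edge[of "Inl u" "Inr (g u)"] u gV
        by (auto simp: functi_V_def)
      then show ?thesis using fix1 t2 u gV by auto
    qed
    have "\<forall>x\<in>V. f (\<tau>2 x) = f x"
    proof
      fix y assume y: "y \<in> V"
      show "f (\<tau>2 y) = f y"
      proof (cases "y \<in> g ` V")
        case True then show ?thesis using gfix by auto
      next
        case False
        have "\<tau>2 y \<notin> g ` V"
        proof
          assume "\<tau>2 y \<in> g ` V"
          then obtain u where u: "u \<in> V" "\<tau>2 y = g u" by auto
          then have "\<tau>2 y = \<tau>2 (g u)" using gfix by auto
          then have "y = g u" using aut2 y u gV by (auto simp: graph_aut_def bij_betw_def inj_on_def)
          then show False using False u by auto
        qed
        moreover have "L (\<sigma> (Inr y)) = L (Inr y)" using pres inrV y by auto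
        ultimately show ?thesis using t2 y False by (auto simp: L_def)
      qed
    qed
    then have "\<forall>x\<in>V. \<tau>2 x = x" using fd aut2 unfolding distinguishing_def by blast
    then have fix2: "\<forall>x\<in>V. \<sigma> (Inr x) = Inr x" using t2 by auto
    show "\<sigma> v = v" using v fix1 fix2 by (auto simp: functi_V_def)
  qed
  then show ?thesis unfolding t_def by blast
qed



lemma invol_aut:
  assumes "\<forall>x\<in>V. \<sigma> x \<in> V" "\<forall>x\<in>V. \<sigma> (\<sigma> x) = x" "\<forall>x\<in>V. \<forall>y\<in>V. E x y \<longleftrightarrow> E (\<sigma> x) (\<sigma> y)"
  shows "graph_aut V E \<sigma>"
  proof -
  have "bij_betw \<sigma> V V" by (rule bij_betw_byWitness[where f'=\<sigma>]) (use assms in auto)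
  then show ?thesis using assms(3) unfolding graph_aut_def by blast
qed

definition H2 :: "nat \<Rightarrow> nat \<Rightarrow> bool" where "H2 x y \<longleftrightarrow> (x = 0 \<and> y = 1) \<or> (x = 1 \<and> y = 0)"

lemma FV2: "functi_V {0::nat,1} = {Inl 0, Inl 1, Inr 0, Inr 1}" by (auto simp: functi_V_def)

lemma sg2: "simple_graph {0::nat,1} H2" by (auto simp: simple_graph_def H2_def)

lemma cg2: "connected_graph {0::nat,1} H2"
proof -
  have a: "(0::nat,1) \<in> {(a, b). H2 a b}\<^sup>*" "(1::nat,0) \<in> {(a, b). H2 a b}\<^sup>*"
    by (auto simp: H2_def intro!: r_into_rtrancl)
  show ?thesis unfolding connected_graph_def using a by auto
qed

lemma c4_not2:
  assumes "\<forall>x\<in>functi_V {0::nat,1}. f x \<in> {1..2::nat}"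
  shows "\<not> distinguishing (functi_V {0::nat,1}) (functi_E {0,1} H2 id) t f"
proof
  assume d: "distinguishing (functi_V {0::nat,1}) (functi_E {0,1} H2 id) t f"
  let ?V = "{Inl 0, Inl 1, Inr 0, Inr 1} :: (nat + nat) set" and ?E = "functi_E {0::nat,1} H2 id"
  let ?a = "Inl 0 :: nat + nat" and ?b = "Inl 1 :: nat + nat" and ?c = "Inr 1 :: nat + nat" and ?d = "Inr 0 :: nat + nat"
  have contra: "\<And>\<sigma> z. graph_aut ?V ?E \<sigma> \<Longrightarrow> (\<forall>x\<in>?V. f (\<sigma> x) = f x) \<Longrightarrow> z \<in> ?V \<Longrightarrow> \<sigma> z \<noteq> z \<Longrightarrow> False"
    using d unfolding distinguishing_def FV2 by blast
  have fr: "f ?a \<in> {1..2}" "f ?b \<in> {1..2}" "f ?c \<in> {1..2}" "f ?d \<in> {1..2}" using assms unfolding FV2 by auto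
  show False
  proof (cases "f ?b = f ?d")
    case True
    let ?s = "id(?b := ?d, ?d := ?b)"
    have "graph_aut ?V ?E ?s" by (rule invol_aut) (auto simp: H2_def)
    then show False using contra[of ?s ?b] True by auto
  next
    case nbd: False
    show False
    proof (cases "f ?a = f ?c")
      case True
      let ?s = "id(?a := ?c, ?c := ?a)"
      have "graph_aut ?V ?E ?s" by (rule invol_aut) (auto simp: H2_def)
      then show False using contra[of ?s ?a] True by auto
    next
      case nac: False
      show False
      proof (cases "f ?a = f ?b")
        case True
        then have "f ?c = f ?d" using nac nbd fr by auto
        let ?s = "id(?a := ?b, ?b := ?a, ?c := ?d, ?d := ?c)"
        have "graph_aut ?V ?E ?s" by (rule invol_aut) (auto simp: H2_def)
        then show False using contra[of ?s ?a] True \<open>f ?c = f ?d\<close> by auto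
      next
        case False
        then have "f ?a = f ?d" "f ?b = f ?c" using nac nbd fr by auto
        let ?s = "id(?a := ?d, ?d := ?a, ?b := ?c, ?c := ?b)"
        have "graph_aut ?V ?E ?s" by (rule invol_aut) (auto simp: H2_def)
        then show False using contra[of ?s ?a] \<open>f ?a = f ?d\<close> \<open>f ?b = f ?c\<close> by auto
      qed
    qed
  qed
qed



lemma deg_pres:
  assumes "graph_aut V E \<sigma>" "x \<in> V"
  shows "card {y\<in>V. E (\<sigma> x) y} = card {y\<in>V. E x y}"
proof -
  have bij: "bij_betw \<sigma> V V" and ed: "\<forall>x\<in>V. \<forall>y\<in>V. E x y \<longleftrightarrow> E (\<sigma> x) (\<sigma> y)"
    using assms(1) by (auto simp: graph_aut_def)
  have "{y\<in>V. E (\<sigma> x) y} = \<sigma> ` {y\<in>V. E x y}"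
  proof
    show "\<sigma> ` {y\<in>V. E x y} \<subseteq> {y\<in>V. E (\<sigma> x) y}" using ed assms(2) bij_betwE[OF bij] by auto
  next
    show "{y\<in>V. E (\<sigma> x) y} \<subseteq> \<sigma> ` {y\<in>V. E x y}"
    proof
      fix z assume z: "z \<in> {y\<in>V. E (\<sigma> x) y}"
      then obtain y where y: "y \<in> V" "z = \<sigma> y" using bij by (auto simp: bij_betw_def)
      then show "z \<in> \<sigma> ` {y\<in>V. E x y}" using z ed assms(2) by auto
    qed
  qed
  moreover have "inj_on \<sigma> {y\<in>V. E x y}"
    using bij by (auto simp: bij_betw_def intro: inj_on_subset)
  ultimately show ?thesis by (simp add: card_image)
qed

definition H3 :: "nat \<Rightarrow> nat \<Rightarrow> bool" where
  "H3 x y \<longleftrightarrow> (x = 0 \<and> y = 1) \<or> (x = 1 \<and> y = 0) \<or> (x = 1 \<and> y = 2) \<or> (x = 2 \<and> y = 1)"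
definition h3 :: "nat \<Rightarrow> nat" where "h3 u = (if u = 2 then 1 else u)"

lemma FV3: "functi_V {0::nat,1,2} = {Inl 0, Inl 1, Inl 2, Inr 0, Inr 1, Inr 2}" by (auto simp: functi_V_def)

lemma sg3: "simple_graph {0::nat,1,2} H3" by (auto simp: simple_graph_def H3_def)

lemma cg3: "connected_graph {0::nat,1,2} H3"
proof -
  let ?R = "{(a, b). H3 a b}"
  have a: "(0::nat,1) \<in> ?R\<^sup>*" "(1::nat,0) \<in> ?R\<^sup>*" "(1::nat,2) \<in> ?R\<^sup>*" "(2::nat,1) \<in> ?R\<^sup>*"
    by (auto simp: H3_def intro!: r_into_rtrancl)
  have b: "(0::nat,2) \<in> ?R\<^sup>*" "(2::nat,0) \<in> ?R\<^sup>*" using rtrancl_trans a by meson+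
  show ?thesis unfolding connected_graph_def using a b by auto
qed

lemma rigid3:
  assumes aut: "graph_aut {Inl 0, Inl 1, Inl 2, Inr 0, Inr 1, Inr 2} (functi_E {0::nat,1,2} H3 h3) \<sigma>"
  shows "\<forall>x\<in>{Inl 0, Inl 1, Inl 2, Inr 0, Inr 1, Inr 2}. \<sigma> x = x"
proof -
  let ?S = "{Inl 0, Inl 1, Inl 2, Inr 0, Inr 1, Inr 2} :: (nat + nat) set"
  let ?E = "functi_E {0::nat,1,2} H3 h3"
  define D where "D x = card {y\<in>?S. ?E x y}" for x
  have n: "{y\<in>?S. ?E (Inl 0) y} = {Inl 1, Inr 0}" "{y\<in>?S. ?E (Inl 1) y} = {Inl 0, Inl 2, Inr 1}"
    "{y\<in>?S. ?E (Inl 2) y} = {Inl 1, Inr 1}" "{y\<in>?S. ?E (Inr 0) y} = {Inl 0, Inr 1}"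
    "{y\<in>?S. ?E (Inr 1) y} = {Inl 1, Inl 2, Inr 0, Inr 2}" "{y\<in>?S. ?E (Inr 2) y} = {Inr 1}"
    by (auto simp: H3_def h3_def)
  have d: "D (Inl 0) = 2" "D (Inl 1) = 3" "D (Inl 2) = 2" "D (Inr 0) = 2" "D (Inr 1) = 4" "D (Inr 2) = 1"
    unfolding D_def n by auto
  have bij: "bij_betw \<sigma> ?S ?S" and ed: "\<forall>x\<in>?S. \<forall>y\<in>?S. ?E x y \<longleftrightarrow> ?E (\<sigma> x) (\<sigma> y)"
    using aut unfolding graph_aut_def by blast+
  have inS: "\<And>x. x \<in> ?S \<Longrightarrow> \<sigma> x \<in> ?S" using bij_betwE[OF bij] by blast
  have inj: "inj_on \<sigma> ?S" using bij by (auto simp: bij_betw_def)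
  have dp: "\<And>x. x \<in> ?S \<Longrightarrow> D (\<sigma> x) = D x" unfolding D_def by (rule deg_pres[OF aut])
  have cases: "\<And>x. x \<in> ?S \<Longrightarrow> \<sigma> x = Inl 0 \<or> \<sigma> x = Inl 1 \<or> \<sigma> x = Inl 2 \<or> \<sigma> x = Inr 0 \<or> \<sigma> x = Inr 1 \<or> \<sigma> x = Inr 2"
    using inS by blast
  have r2: "\<sigma> (Inr 2) = Inr 2" using cases[of "Inr 2"] dp[of "Inr 2"] d by auto
  have l1: "\<sigma> (Inl 1) = Inl 1" using cases[of "Inl 1"] dp[of "Inl 1"] d by auto
  have r1: "\<sigma> (Inr 1) = Inr 1" using cases[of "Inr 1"] dp[of "Inr 1"] d by auto
  have e1: "\<not> ?E (Inl 0) (Inr 1)" by (simp add: h3_def)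
  have e2: "?E (Inl 2) (Inr 1)" "?E (Inr 0) (Inr 1)" "\<not> ?E (Inr 0) (Inl 1)" "?E (Inl 2) (Inl 1)"
    by (simp_all add: h3_def H3_def)
  have "?E (Inl 0) (Inr 1) = ?E (\<sigma> (Inl 0)) (\<sigma> (Inr 1))" using ed by blast
  then have "\<not> ?E (\<sigma> (Inl 0)) (Inr 1)" using e1 r1 by simp
  then have l0: "\<sigma> (Inl 0) = Inl 0" using cases[of "Inl 0"] dp[of "Inl 0"] d e2 by auto
  have "?E (Inl 2) (Inl 1) = ?E (\<sigma> (Inl 2)) (\<sigma> (Inl 1))" using ed by blast
  then have "?E (\<sigma> (Inl 2)) (Inl 1)" using e2 l1 by simp
  moreover have "\<sigma> (Inl 2) \<noteq> Inl 0" using l0 inj_onD[OF inj, of "Inl 2" "Inl 0"] by auto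
  ultimately have l2: "\<sigma> (Inl 2) = Inl 2" using cases[of "Inl 2"] dp[of "Inl 2"] d e2 by auto
  have "\<sigma> (Inr 0) \<noteq> Inl 0" "\<sigma> (Inr 0) \<noteq> Inl 2"
    using l0 l2 inj_onD[OF inj, of "Inr 0" "Inl 0"] inj_onD[OF inj, of "Inr 0" "Inl 2"] by auto
  then have r0: "\<sigma> (Inr 0) = Inr 0" using cases[of "Inr 0"] dp[of "Inr 0"] d by auto
  show ?thesis using l0 l1 l2 r0 r1 r2 by auto
qed


theorem proposition2p1:
  fixes V :: "'a set" and E :: "'a \<Rightarrow> 'a \<Rightarrow> bool" and g :: "'a \<Rightarrow> 'a"
  assumes "simple_graph V E" and "connected_graph V E" and "card V \<ge> 2"
    and "\<forall>u\<in>V. g u \<in> V"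
  shows "1 \<le> Dist (functi_V V) (functi_E V E g) \<and>
         Dist (functi_V V) (functi_E V E g) \<le> Dist V E + 1 \<and>
         (\<exists>(W :: nat set) H h. simple_graph W H \<and> connected_graph W H \<and> card W \<ge> 2 \<and>
             (\<forall>u\<in>W. h u \<in> W) \<and> Dist (functi_V W) (functi_E W H h) = 1) \<and>
         (\<exists>(W :: nat set) H h. simple_graph W H \<and> connected_graph W H \<and> card W \<ge> 2 \<and>
             (\<forall>u\<in>W. h u \<in> W) \<and> Dist (functi_V W) (functi_E W H h) = Dist W H + 1)"
proof (intro conjI)
  obtain L where L: "distinguishing (functi_V V) (functi_E V E g) (Dist V E + 1) L"
    using main_ub[OF assms(1,2,4)] by blast
  have "V \<noteq> {}" using assms(2) by (simp add: connected_graph_def)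
  then have ne: "functi_V V \<noteq> {}" by (simp add: functi_V_def)
  show "1 \<le> Dist (functi_V V) (functi_E V E g)" by (rule Dist_ge1[OF ne L])
  show "Dist (functi_V V) (functi_E V E g) \<le> Dist V E + 1" by (rule Dist_le[OF L])
next
  have maps: "\<forall>u\<in>{0::nat,1,2}. h3 u \<in> {0,1,2}" by (auto simp: h3_def)
  obtain L where L: "distinguishing (functi_V {0::nat,1,2}) (functi_E {0,1,2} H3 h3) (Dist {0::nat,1,2} H3 + 1) L"
    using main_ub[OF sg3 cg3 maps] by blast
  have ne: "functi_V {0::nat,1,2} \<noteq> {}" by (simp add: functi_V_def)
  have ge: "1 \<le> Dist (functi_V {0::nat,1,2}) (functi_E {0,1,2} H3 h3)" using Dist_ge1[OF ne L] .
  have "distinguishing (functi_V {0::nat,1,2}) (functi_E {0,1,2} H3 h3) 1 (\<lambda>_. 1)"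
    unfolding distinguishing_def FV3
  proof (intro conjI allI impI)
    show "\<forall>x\<in>{Inl 0, Inl 1, Inl 2, Inr 0, Inr 1, Inr 2}. (1::nat) \<in> {1..1}" by simp
  next
    fix \<sigma> :: "nat + nat \<Rightarrow> nat + nat"
    assume "graph_aut {Inl 0, Inl 1, Inl 2, Inr 0, Inr 1, Inr 2} (functi_E {0, 1, 2} H3 h3) \<sigma> \<and>
      (\<forall>x\<in>{Inl 0, Inl 1, Inl 2, Inr 0, Inr 1, Inr 2}. (1::nat) = 1)"
    then show "\<forall>x\<in>{Inl 0, Inl 1, Inl 2, Inr 0, Inr 1, Inr 2}. \<sigma> x = x" using rigid3 by blast
  qed
  then have "Dist (functi_V {0::nat,1,2}) (functi_E {0,1,2} H3 h3) \<le> 1" by (rule Dist_le)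
  with ge have "Dist (functi_V {0::nat,1,2}) (functi_E {0,1,2} H3 h3) = 1" by simp
  moreover have "card {0::nat,1,2} \<ge> 2" by simp
  ultimately show "\<exists>(W :: nat set) H h. simple_graph W H \<and> connected_graph W H \<and> card W \<ge> 2 \<and>
             (\<forall>u\<in>W. h u \<in> W) \<and> Dist (functi_V W) (functi_E W H h) = 1"
    using sg3 cg3 maps by blast
next
  have maps: "\<forall>u\<in>{0::nat,1}. id u \<in> {0,1}" by auto
  obtain L where L: "distinguishing (functi_V {0::nat,1}) (functi_E {0,1} H2 id) (Dist {0::nat,1} H2 + 1) L"
    using main_ub[OF sg2 cg2 maps] by blast
  have ub: "Dist (functi_V {0::nat,1}) (functi_E {0,1} H2 id) \<le> Dist {0::nat,1} H2 + 1" by (rule Dist_le[OF L])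
  obtain f0 where "distinguishing {0::nat,1} H2 (card {0::nat,1}) f0" using exists_dist[of "{0::nat,1}"] by auto
  moreover have "card {0::nat,1} = 2" by simp
  ultimately have "distinguishing {0::nat,1} H2 2 f0" by metis
  then have d2: "Dist {0::nat,1} H2 \<le> 2" by (rule Dist_le)
  have fin: "finite (functi_V {0::nat,1})" by (simp add: functi_V_def)
  define f' where "f' = (SOME f. distinguishing (functi_V {0::nat,1}) (functi_E {0,1} H2 id) (Dist (functi_V {0::nat,1}) (functi_E {0,1} H2 id)) f)"
  have df: "distinguishing (functi_V {0::nat,1}) (functi_E {0,1} H2 id) (Dist (functi_V {0::nat,1}) (functi_E {0,1} H2 id)) f'"
    unfolding f'_def by (rule Dist_ex[OF fin])
  have lb: "Dist (functi_V {0::nat,1}) (functi_E {0,1} H2 id) \<ge> 3"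
  proof (rule ccontr)
    assume "\<not> ?thesis"
    then have "Dist (functi_V {0::nat,1}) (functi_E {0,1} H2 id) \<le> 2" by simp
    have "\<forall>x\<in>functi_V {0::nat,1}. f' x \<in> {1..Dist (functi_V {0::nat,1}) (functi_E {0,1} H2 id)}"
      using df unfolding distinguishing_def by blast
    then have h: "\<forall>x\<in>functi_V {0::nat,1}. f' x \<in> {1..2::nat}" using \<open>Dist (functi_V {0::nat,1}) (functi_E {0,1} H2 id) \<le> 2\<close>
      by (meson atLeastAtMost_iff order_trans)
    show False using c4_not2[OF h] df by blast
  qed
  have "Dist (functi_V {0::nat,1}) (functi_E {0,1} H2 id) = Dist {0::nat,1} H2 + 1" using ub d2 lb by simp
  moreover have "card {0::nat,1} \<ge> 2" by simp
  ultimately show "\<exists>(W :: nat set) H h. simple_graph W H \<and> connected_graph W H \<and> card W \<ge> 2 \<and>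
             (\<forall>u\<in>W. h u \<in> W) \<and> Dist (functi_V W) (functi_E W H h) = Dist W H + 1"
    using sg2 cg2 maps by blast
qed

end
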